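(* Let $\mathcal{A}:\mathbb{R}^{n_1\times n_2}\to\mathbb{R}^m$ be linear, $R\ge1$, $\alpha,\beta>0$, and let $\hat X=\sum_{r=1}^R\hat u^r(\hat v^r)^T$ with $\hat u^r\in\mathbb{R}^{n_1}$, $\hat v^r\in\mathbb{R}^{n_2}$. Let $\eta\in\mathbb{R}^m$ and $y=\mathcal{A}(\hat X)+\eta$. If $(u^1_{\alpha,\beta},\dots,u^R_{\alpha,\beta},v^1_{\alpha,\beta},\dots,v^R_{\alpha,\beta})$ is a global minimizer of $J^R_{\alpha,\beta}$ and $X_{\alpha,\beta}=\sum_{r=1}^R u^r_{\alpha,\beta}(v^r_{\alpha,\beta})^T$, then $$\|y-\mathcal{A}(X_{\alpha,\beta})\|_2^2\le\|\eta\|_2^2+C_{2,1}\sqrt[3]{\alpha\beta^2}\sum_{r=1}^R\left(\|\hat u^r\|_2\|\hat v^r\|_1\right)^{2/3}.$$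
   Context: For $y\in\mathbb{R}^m$ and $\alpha,\beta>0$, the functional $J^R_{\alpha,\beta}:(\mathbb{R}^{n_1})^R\times(\mathbb{R}^{n_2})^R\to\mathbb{R}$ is $$J^R_{\alpha,\beta}(u^1,\dots,u^R,v^1,\dots,v^R)=\Big\|y-\mathcal{A}\Big(\sum_{r=1}^Ru^r(v^r)^T\Big)\Big\|_2^2+\alpha\sum_{r=1}^R\|u^r\|_2^2+\beta\sum_{r=1}^R\|v^r\|_1.$$ The constant is $C_{2,1}=(1/2)^{2/3}+2^{1/3}$. *)

theory Defs
  imports "HOL-Analysis.Analysis"
begin

definition outer :: "real^'n1 \<Rightarrow> real^'n2 \<Rightarrow> real^'n2^'n1" where
  "outer u v = (\<chi> i j. u $ i * v $ j)"

definition norm1 :: "real^'n \<Rightarrow> real" where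
  "norm1 v = (\<Sum>i\<in>UNIV. \<bar>v $ i\<bar>)"

definition J :: "(real^'n2^'n1 \<Rightarrow> real^'m) \<Rightarrow> real^'m \<Rightarrow> real \<Rightarrow> real \<Rightarrow> nat
    \<Rightarrow> (nat \<Rightarrow> real^'n1) \<Rightarrow> (nat \<Rightarrow> real^'n2) \<Rightarrow> real" where
  "J A y \<alpha> \<beta> R u v =
     (norm (y - A (\<Sum>r=1..R. outer (u r) (v r))))\<^sup>2
     + \<alpha> * (\<Sum>r=1..R. (norm (u r))\<^sup>2) + \<beta> * (\<Sum>r=1..R. norm1 (v r))"

definition C21 :: real where
  "C21 = (1/2) powr (2/3) + 2 powr (1/3)"

end

theory Submission
  imports Defs
begin

lemma cube: "a > 0 \<Longrightarrow> (a powr (1/3::real))^3 = a"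
  by (simp add: powr_realpow[symmetric] powr_powr)
lemma sq23: "a > 0 \<Longrightarrow> (a powr (1/3::real))^2 = a powr (2/3)"
  by (simp add: powr_realpow[symmetric] powr_powr)
lemma half: "(1/2::real) powr (2/3) = 1 / (2 powr (1/3))^2"
  by (simp add: sq23 powr_divide)
lemma rt: "\<alpha> > 0 \<Longrightarrow> root 3 (\<alpha> * \<beta>^2) = root 3 \<alpha> * (root 3 \<beta>)^2"
  by (simp add: real_root_mult real_root_power)

lemma core: fixes x z c d p :: real assumes "x>0" "z>0" "c>0" "d>0" "p>0"
  shows "c^3 * ((d*z/(p*c*x^2)) * x^3)^2 + d^3 * (z^3 / (d*z/(p*c*x^2)))
     = (1/p^2 + p) * (c * d^2) * (x*z)^2"
  using assms by (simp add: field_simps power2_eq_square power3_eq_cube)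

lemma norm1_nonneg: "norm1 v \<ge> 0"
  unfolding norm1_def by (simp add: sum_nonneg)

lemma norm1_scale: "norm1 (s *\<^sub>R v) = \<bar>s\<bar> * norm1 v"
  unfolding norm1_def by (simp add: sum_distrib_left abs_mult)

lemma norm1_zero: "norm1 v = 0 \<Longrightarrow> v = 0"
  unfolding norm1_def by (simp add: sum_nonneg_eq_0_iff vec_eq_iff)

lemma outer_scale: "t \<noteq> 0 \<Longrightarrow> outer (t *\<^sub>R u) ((1/t) *\<^sub>R v) = outer u v"
  unfolding outer_def by (simp add: vec_eq_iff)

lemma outer_0l: "outer 0 v = 0" unfolding outer_def by (simp add: vec_eq_iff)
lemma outer_0r: "outer u 0 = 0" unfolding outer_def by (simp add: vec_eq_iff)

lemma per_r:
  fixes a b \<alpha> \<beta> :: real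
  assumes "a > 0" "b > 0" "\<alpha> > 0" "\<beta> > 0"
  defines "t \<equiv> root 3 \<beta> * b powr (1/3) / (2 powr (1/3) * root 3 \<alpha> * (a powr (1/3))^2)"
  shows "t > 0" "\<alpha> * (t * a)^2 + \<beta> * (b / t) = C21 * root 3 (\<alpha> * \<beta>^2) * (a * b) powr (2/3)"
proof -
  define x where "x = a powr (1/3)"
  define z where "z = b powr (1/3)"
  define c where "c = root 3 \<alpha>"
  define d where "d = root 3 \<beta>"
  define p where "p = 2 powr (1/3::real)"
  have pos: "x>0" "z>0" "c>0" "d>0" "p>0" using assms by (auto simp: x_def z_def c_def d_def p_def)
  have ht: "t = d*z/(p*c*x^2)" unfolding t_def x_def z_def c_def d_def p_def by simp
  show "t > 0" using pos ht by simp
  have a: "a = x^3" using assms cube x_def by simp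
  have b: "b = z^3" using assms cube z_def by simp
  have al: "\<alpha> = c^3" using assms c_def by simp
  have be: "\<beta> = d^3" using assms d_def by simp
  have C: "C21 = 1/p^2 + p" unfolding C21_def p_def by (simp add: half)
  have R: "root 3 (\<alpha> * \<beta>^2) = c * d^2" using rt assms c_def d_def by simp
  have P: "(a * b) powr (2/3) = (x*z)^2"
    using assms by (simp add: powr_mult x_def z_def sq23[symmetric] power_mult_distrib)
  have "\<alpha> * (t * a)^2 + \<beta> * (b / t) = c^3 * ((d*z/(p*c*x^2)) * x^3)^2 + d^3 * (z^3 / (d*z/(p*c*x^2)))"
    using a b al be ht by simp
  also have "\<dots> = (1/p^2 + p) * (c * d^2) * (x*z)^2" using core pos by blast
  finally show "\<alpha> * (t * a)^2 + \<beta> * (b / t) = C21 * root 3 (\<alpha> * \<beta>^2) * (a * b) powr (2/3)"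
    using C R P by simp
qed

theorem mainTheorem2:
  fixes A :: "real^'n2^'n1 \<Rightarrow> real^'m"
    and R :: nat and \<alpha> \<beta> :: real
    and uh u :: "nat \<Rightarrow> real^'n1" and vh v :: "nat \<Rightarrow> real^'n2"
    and \<eta> y :: "real^'m"
  assumes "linear A"
    and "R \<ge> 1" and "\<alpha> > 0" and "\<beta> > 0"
    and "y = A (\<Sum>r=1..R. outer (uh r) (vh r)) + \<eta>"
    and "\<forall>u' v'. J A y \<alpha> \<beta> R u v \<le> J A y \<alpha> \<beta> R u' v'"
  shows "(norm (y - A (\<Sum>r=1..R. outer (u r) (v r))))\<^sup>2
     \<le> (norm \<eta>)\<^sup>2 + C21 * root 3 (\<alpha> * \<beta>\<^sup>2)
        * (\<Sum>r=1..R. (norm (uh r) * norm1 (vh r)) powr (2/3))"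
proof -
  define tt where "tt r = root 3 \<beta> * norm1 (vh r) powr (1/3) /
      (2 powr (1/3) * root 3 \<alpha> * (norm (uh r) powr (1/3))^2)" for r
  define good where "good r \<longleftrightarrow> norm (uh r) > 0 \<and> norm1 (vh r) > 0" for r
  define u' where "u' r = (if good r then tt r *\<^sub>R uh r else 0)" for r
  define v' where "v' r = (if good r then (1 / tt r) *\<^sub>R vh r else 0)" for r
  have tpos: "good r \<Longrightarrow> tt r > 0" for r
    using per_r(1)[of "norm (uh r)" "norm1 (vh r)" \<alpha> \<beta>] assms(3,4) unfolding good_def tt_def by blast
  have outer_eq: "outer (u' r) (v' r) = outer (uh r) (vh r)" for r
  proof (cases "good r")
    case True then show ?thesis using tpos[OF True] by (simp add: u'_def v'_def outer_scale)
  next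
    case False
    then have "uh r = 0 \<or> vh r = 0" unfolding good_def
      using norm1_zero norm1_nonneg[of "vh r"] by force
    then show ?thesis using False by (auto simp: u'_def v'_def outer_0l outer_0r)
  qed
  have term_eq: "\<alpha> * (norm (u' r))^2 + \<beta> * norm1 (v' r)
      = C21 * root 3 (\<alpha> * \<beta>^2) * (norm (uh r) * norm1 (vh r)) powr (2/3)" for r
  proof (cases "good r")
    case True
    have t: "tt r > 0" using tpos[OF True] .
    have "\<alpha> * (norm (u' r))^2 + \<beta> * norm1 (v' r) = \<alpha> * (tt r * norm (uh r))^2 + \<beta> * (norm1 (vh r) / tt r)"
      using True t by (simp add: u'_def v'_def norm1_scale)
    also have "\<dots> = C21 * root 3 (\<alpha> * \<beta>^2) * (norm (uh r) * norm1 (vh r)) powr (2/3)"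
      using per_r(2)[of "norm (uh r)" "norm1 (vh r)" \<alpha> \<beta>] True assms(3,4)
      unfolding good_def tt_def by blast
    finally show ?thesis .
  next
    case False
    then have "norm (uh r) * norm1 (vh r) = 0" unfolding good_def
      using norm1_nonneg[of "vh r"] by (metis mult_eq_0_iff norm_ge_zero order_less_le)
    then show ?thesis using False by (simp add: u'_def v'_def norm1_def)
  qed
  have "(norm (y - A (\<Sum>r=1..R. outer (u r) (v r))))\<^sup>2 \<le> J A y \<alpha> \<beta> R u v"
    unfolding J_def using assms(3,4)
    by (simp add: sum_nonneg norm1_nonneg)
  also have "\<dots> \<le> J A y \<alpha> \<beta> R u' v'" using assms(6) by blast
  also have "\<dots> = (norm \<eta>)\<^sup>2 + (\<Sum>r=1..R. \<alpha> * (norm (u' r))^2 + \<beta> * norm1 (v' r))"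
    unfolding J_def by (simp add: outer_eq assms(5) sum.distrib sum_distrib_left)
  also have "\<dots> = (norm \<eta>)\<^sup>2 + C21 * root 3 (\<alpha> * \<beta>\<^sup>2)
        * (\<Sum>r=1..R. (norm (uh r) * norm1 (vh r)) powr (2/3))"
    by (simp add: term_eq sum_distrib_left)
  finally show ?thesis .
qed

end
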